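(* Fix $0<\rho<1$. For $t\in(0,1]$ write $c=\sqrt{t}$ and define $$\begin{aligned}T(t)={}&\frac{2(1+\rho^2-\frac{2}{3}\rho^2 c^2)^{\frac{3}{2}}}{3\rho^2c^2}+\frac{7}{6}-\frac{\rho^2}{10}+\frac{2\rho^2c^2}{15} +\Big(\frac{1}{6}-\frac{7(1+\rho^2)}{30\rho^2c^2}\Big)\Big(\sqrt{1+\rho^2-2\rho c}+\sqrt{1+\rho^2+2\rho c}\Big)\\&+\Big(\frac{\rho c}{12}-\frac{10\rho^2+1}{60\rho c}+\frac{(1+\rho^2)^2}{10\rho^3c^3}\Big)\Big(\sqrt{1+\rho^2-2\rho c}-\sqrt{1+\rho^2+2\rho c}\Big).\end{aligned}$$ Then the left derivative of $T$ at $t=1$ exists and satisfies $T'_{-}(1)\ge 0$. *)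

theory Defs
  imports "HOL-Analysis.Analysis"
begin

definition T :: "real \<Rightarrow> real \<Rightarrow> real" where
  "T \<rho> t = (let c = sqrt t in
      2 * (1 + \<rho>^2 - 2/3 * \<rho>^2 * c^2) powr (3/2) / (3 * \<rho>^2 * c^2)
      + 7/6 - \<rho>^2/10 + 2 * \<rho>^2 * c^2 / 15
      + (1/6 - 7 * (1 + \<rho>^2) / (30 * \<rho>^2 * c^2))
          * (sqrt (1 + \<rho>^2 - 2*\<rho>*c) + sqrt (1 + \<rho>^2 + 2*\<rho>*c))
      + (\<rho>*c/12 - (10*\<rho>^2 + 1)/(60*\<rho>*c) + (1 + \<rho>^2)^2 / (10 * \<rho>^3 * c^3))
          * (sqrt (1 + \<rho>^2 - 2*\<rho>*c) - sqrt (1 + \<rho>^2 + 2*\<rho>*c)))"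

end

theory Submission
  imports Defs
begin

lemma derA:
  fixes r :: real
  assumes r: "0 < r" "r < 1"
  shows "((\<lambda>t. sqrt (1 + r^2 - 2*r * sqrt t)) has_real_derivative - r / (2*(1-r))) (at 1)"
proof -
  have e: "1 + r^2 - 2*r = (1-r)^2" by (simp add: power2_eq_square algebra_simps)
  have a: "sqrt (1 + r^2 - 2*r) = 1 - r" using r e by simp
  have a0: "1 + r^2 - 2*r > 0" using r e by simp
  show ?thesis
    using a a0 r by (auto intro!: derivative_eq_intros simp: field_simps)
qed

lemma derB:
  fixes r :: real
  assumes r: "0 < r" "r < 1"
  shows "((\<lambda>t. sqrt (1 + r^2 + 2*r * sqrt t)) has_real_derivative r / (2*(1+r))) (at 1)"
proof -
  have e: "1 + r^2 + 2*r = (1+r)^2" by (simp add: power2_eq_square algebra_simps)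
  have a: "sqrt (1 + r^2 + 2*r) = 1 + r" using r e by simp
  have a0: "1 + r^2 + 2*r > 0" using r e by simp
  show ?thesis
    using a a0 r by (auto intro!: derivative_eq_intros simp: field_simps)
qed

lemma derQ:
  fixes r :: real
  assumes r: "0 < r" "r < 1"
  shows "((\<lambda>t. (1 + r^2 - 2/3 * r^2 * t) * sqrt (1 + r^2 - 2/3 * r^2 * t)) has_real_derivative
     (- (r^2 * sqrt (1 + r^2 - 2/3 * r^2)))) (at 1)"
proof -
  have p0: "1 + r^2 - 2/3 * r^2 > 0" proof -
    have "r^2 > 0" using r by simp
    then show ?thesis by linarith
  qed
  let ?S = "sqrt (1 + r^2 - 2/3 * r^2)"
  have S2: "?S * ?S = 1 + r^2 - 2/3 * r^2" using p0 by simp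
  have Sp: "?S > 0" using p0 by simp
  show ?thesis
    using p0 S2 Sp apply (auto intro!: derivative_eq_intros)
    apply (simp add: field_simps)
    done
qed

lemma alg:
  fixes r S :: real
  assumes r: "0 < r" "r < 1"
  shows "(- (6 * (r\<^sup>2 * (S * r\<^sup>2))) - 6 * ((1 + r^2 - 2/3 * r^2) * S * r\<^sup>2)) / (9 * r ^ 4) +
        2 * r\<^sup>2 / 15 +
        (r\<^sup>2 * (7 + 7 * r\<^sup>2) * ((1-r) + (1+r)) / (30 * r ^ 4) +
         (r / (2 + 2 * r) - r / (2 - 2 * r)) *
         (1 / 6 - (7 + 7 * r\<^sup>2) / (30 * r\<^sup>2))) +
        ((r / 24 + (300 * r\<^sup>2 + 30) / (3600 * r) -
          3 * (r ^ 3 * (1 + r\<^sup>2)\<^sup>2) / (20 * r ^ 6)) *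
         ((1-r) - (1+r)) +
         (- (r / (2 - 2 * r)) - r / (2 + 2 * r)) *
         (r / 12 - (10 * r\<^sup>2 + 1) / (60 * r) + (1 + r\<^sup>2)\<^sup>2 / (10 * r ^ 3))) =
       (-(4/(3*r^2))*S*(1+4*r^2/3) + 4*r^2/15
      + 14*(1+r^2)/(15*r^2)+(7+2*r^2)/(15*(1-r^2))
      + (0 - r^2/6-(10*r^2+1)/30+3*(1+r^2)^2/(5*r^2))
      + (0 - r^2/6+(10*r^2+1)/30-(1+r^2)^2/(5*r^2))/(1-r^2)) / 2"
proof -
  obtain a b where ha: "a = 1 - r" and hb: "b = 1 + r" by blast
  have ab: "a \<noteq> 0" "b \<noteq> 0" "r \<noteq> 0" using r ha hb by auto
  have e1: "2 - 2*r = 2*a" "2 + 2*r = 2*b" "1 - r^2 = a * b" unfolding ha hb by (auto simp: power2_eq_square algebra_simps)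
  have t1: "(- (6 * (r\<^sup>2 * (S * r\<^sup>2))) - 6 * ((1 + r^2 - 2/3 * r^2) * S * r\<^sup>2)) / (9 * r ^ 4)
     = (-(4/(3*r^2))*S*(1+4*r^2/3))/2"
    using ab by (simp add: field_simps power2_eq_square power4_eq_xxxx; simp add: algebra_simps)
  have t3: "r\<^sup>2 * (7 + 7 * r\<^sup>2) * (a + b) / (30 * r ^ 4) +
         (r / (2 * b) - r / (2 * a)) *
         (1 / 6 - (7 + 7 * r\<^sup>2) / (30 * r\<^sup>2))
     = (14*(1+r^2)/(15*r^2)+(7+2*r^2)/(15*(a*b)))/2"
    using ab by (simp add: field_simps power2_eq_square power4_eq_xxxx; simp add: ha hb algebra_simps)
  have t4: "(r / 24 + (300 * r\<^sup>2 + 30) / (3600 * r) -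
          3 * (r ^ 3 * (1 + r\<^sup>2)\<^sup>2) / (20 * r ^ 6)) *
         (a - b) +
         (- (r / (2 * a)) - r / (2 * b)) *
         (r / 12 - (10 * r\<^sup>2 + 1) / (60 * r) + (1 + r\<^sup>2)\<^sup>2 / (10 * r ^ 3))
     = ((0 - r^2/6-(10*r^2+1)/30+3*(1+r^2)^2/(5*r^2))
      + (0 - r^2/6+(10*r^2+1)/30-(1+r^2)^2/(5*r^2))/(a*b)) / 2"
    using ab apply (simp add: field_simps power2_eq_square power3_eq_cube)
    unfolding ha hb by algebra
  show ?thesis
    unfolding e1 ha[symmetric] hb[symmetric] t1 t3 t4 using ab by (simp add: field_simps)
qed

lemma derT2:
  fixes r :: real
  assumes r: "0 < r" "r < 1"
  defines "A \<equiv> \<lambda>t::real. sqrt (1 + r^2 - 2*r * sqrt t)"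
  defines "B \<equiv> \<lambda>t::real. sqrt (1 + r^2 + 2*r * sqrt t)"
  defines "Q \<equiv> \<lambda>t::real. (1 + r^2 - 2/3 * r^2 * t) * sqrt (1 + r^2 - 2/3 * r^2 * t)"
  defines "S \<equiv> sqrt (1 + r^2 - 2/3 * r^2)"
  defines "D \<equiv> (-(4/(3*r^2))*S*(1+4*r^2/3) + 4*r^2/15
      + 14*(1+r^2)/(15*r^2)+(7+2*r^2)/(15*(1-r^2))
      + (0 - r^2/6-(10*r^2+1)/30+3*(1+r^2)^2/(5*r^2))
      + (0 - r^2/6+(10*r^2+1)/30-(1+r^2)^2/(5*r^2))/(1-r^2)) / 2"
  shows "((\<lambda>t. 2 * Q t / (3 * r^2 * t)
      + 7/6 - r^2/10 + 2 * r^2 * t / 15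
      + (1/6 - 7 * (1 + r^2) / (30 * r^2 * t)) * (A t + B t)
      + (r * sqrt t/12 - (10*r^2 + 1)/(60*r * sqrt t) + (1 + r^2)^2 / (10 * r^3 * (t * sqrt t))) * (A t - B t))
     has_real_derivative D) (at 1)"
proof -
  have dA: "(A has_real_derivative - r / (2*(1-r))) (at 1)" unfolding A_def by (rule derA[OF r])
  have dB: "(B has_real_derivative r / (2*(1+r))) (at 1)" unfolding B_def by (rule derB[OF r])
  have dQ: "(Q has_real_derivative (- (r^2 * S))) (at 1)" unfolding Q_def S_def by (rule derQ[OF r])
  have e: "1 + r^2 - 2*r = (1-r)^2" by (simp add: power2_eq_square algebra_simps)
  have A1: "A 1 = 1 - r" using r e by (simp add: A_def)
  have e2: "1 + r^2 + 2*r = (1+r)^2" by (simp add: power2_eq_square algebra_simps)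
  have B1: "B 1 = 1 + r" using r e2 by (simp add: B_def)
  have Q1: "Q 1 = (1 + r^2 - 2/3 * r^2) * S" by (simp add: Q_def S_def)
  have r1: "1 - r^2 \<noteq> 0" "1 - r \<noteq> 0" "1 + r \<noteq> 0" using r by (auto simp: power2_eq_square) (smt (verit) mult_less_cancel_right1)
  have r2: "1 - r^2 = (1-r)*(1+r)" by (simp add: power2_eq_square algebra_simps)
  have r3: "2 - 2*r \<noteq> 0" "2 + 2*r \<noteq> 0" "r^2 \<noteq> 1" using r r1 by auto
  show ?thesis
    using r apply (auto intro!: derivative_eq_intros dA dB dQ)
    unfolding A1 B1 Q1 D_def
    by (rule alg[OF r])
qed

lemma Dpos:
  fixes r :: real
  assumes r: "0 < r" "r < 1"
  defines "S \<equiv> sqrt (1 + r^2 - 2/3 * r^2)"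
  shows "0 \<le> (-(4/(3*r^2))*S*(1+4*r^2/3) + 4*r^2/15
      + 14*(1+r^2)/(15*r^2)+(7+2*r^2)/(15*(1-r^2))
      + (0 - r^2/6-(10*r^2+1)/30+3*(1+r^2)^2/(5*r^2))
      + (0 - r^2/6+(10*r^2+1)/30-(1+r^2)^2/(5*r^2))/(1-r^2)) / 2"
proof -
  obtain u where hu: "u = r^2" by blast
  have u0: "0 < u" "u < 1" using r hu by (auto simp: power_less_one_iff)
  have S2: "S^2 = 1 + u/3" unfolding S_def hu using u0 hu by simp
  have S0: "S \<ge> 0" unfolding S_def by simp
  define N where "N = 40 + 20*u - 49*u^2 - 11*u^3"
  define M where "M = (40/3)*(1-u)*(3+4*u)"
  have Nf: "N = (1-u)*(40+60*u+11*u^2)" unfolding N_def by algebra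
  have N0: "N \<ge> 0" unfolding Nf using u0 by simp
  have id: "N^2 - (M*S)^2 = (1-u)^2*(5760*u^2+10040*u^3+3267*u^4)/27"
    unfolding Nf M_def power_mult_distrib S2 by algebra
  have "(M*S)^2 \<le> N^2" using id u0 by (smt (verit) divide_nonneg_pos mult_nonneg_nonneg zero_le_power2 zero_less_power)
  then have key: "M*S \<le> N" using N0 by (rule power2_le_imp_le)
  have eq: "(-(4/(3*r^2))*S*(1+4*r^2/3) + 4*r^2/15
      + 14*(1+r^2)/(15*r^2)+(7+2*r^2)/(15*(1-r^2))
      + (0 - r^2/6-(10*r^2+1)/30+3*(1+r^2)^2/(5*r^2))
      + (0 - r^2/6+(10*r^2+1)/30-(1+r^2)^2/(5*r^2))/(1-r^2)) / 2
      = ((N - M*S) / (30*u*(1-u)))/2"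
  proof -
    obtain a where ha: "a = 1 - u" by blast
    have "u \<noteq> 0" "a \<noteq> 0" using u0 ha by auto
    then show ?thesis unfolding hu[symmetric] N_def M_def ha[symmetric]
      apply (simp add: field_simps power2_eq_square power3_eq_cube)
      unfolding ha
      apply algebra
      done
  qed
  show ?thesis unfolding eq using key u0 by simp
qed

theorem lemma7:
  fixes \<rho> :: real
  assumes "0 < \<rho>" and "\<rho> < 1"
  shows "\<exists>D. (T \<rho> has_real_derivative D) (at 1 within {0<..1}) \<and> D \<ge> 0"
proof -
  define r where "r = \<rho>"
  have r: "0 < r" "r < 1" using assms r_def by auto
  define S where "S = sqrt (1 + r^2 - 2/3 * r^2)"
  define D where "D = (-(4/(3*r^2))*S*(1+4*r^2/3) + 4*r^2/15
      + 14*(1+r^2)/(15*r^2)+(7+2*r^2)/(15*(1-r^2))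
      + (0 - r^2/6-(10*r^2+1)/30+3*(1+r^2)^2/(5*r^2))
      + (0 - r^2/6+(10*r^2+1)/30-(1+r^2)^2/(5*r^2))/(1-r^2)) / 2"
  have d2: "((\<lambda>t. 2 * ((1 + r^2 - 2/3 * r^2 * t) * sqrt (1 + r^2 - 2/3 * r^2 * t)) / (3 * r^2 * t)
      + 7/6 - r^2/10 + 2 * r^2 * t / 15
      + (1/6 - 7 * (1 + r^2) / (30 * r^2 * t)) * (sqrt (1 + r^2 - 2*r * sqrt t) + sqrt (1 + r^2 + 2*r * sqrt t))
      + (r * sqrt t/12 - (10*r^2 + 1)/(60*r * sqrt t) + (1 + r^2)^2 / (10 * r^3 * (t * sqrt t)))
         * (sqrt (1 + r^2 - 2*r * sqrt t) - sqrt (1 + r^2 + 2*r * sqrt t)))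
     has_real_derivative D) (at 1)"
    using derT2[OF r] unfolding D_def S_def by simp
  have eqT: "(\<lambda>t. 2 * ((1 + r^2 - 2/3 * r^2 * t) * sqrt (1 + r^2 - 2/3 * r^2 * t)) / (3 * r^2 * t)
      + 7/6 - r^2/10 + 2 * r^2 * t / 15
      + (1/6 - 7 * (1 + r^2) / (30 * r^2 * t)) * (sqrt (1 + r^2 - 2*r * sqrt t) + sqrt (1 + r^2 + 2*r * sqrt t))
      + (r * sqrt t/12 - (10*r^2 + 1)/(60*r * sqrt t) + (1 + r^2)^2 / (10 * r^3 * (t * sqrt t)))
         * (sqrt (1 + r^2 - 2*r * sqrt t) - sqrt (1 + r^2 + 2*r * sqrt t))) t = T \<rho> t"
    if t: "t \<in> {0<..<3/2}" for t
  proof -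
    have t0: "0 < t" "t < 3/2" using t by auto
    have c2: "sqrt t ^ 2 = t" using t0 by simp
    have c3: "sqrt t ^ 3 = t * sqrt t" using t0 by (simp add: power3_eq_cube)
    have "r^2 * t < r^2 * (3/2)" using t0 r by simp
    moreover have "2/3 * r^2 * t = 2/3*(r^2*t)" by simp
    ultimately have p0: "0 < 1 + r^2 - 2/3 * r^2 * t" by linarith
    have pw: "(1 + r^2 - 2/3 * r^2 * t) powr (3/2) = (1 + r^2 - 2/3 * r^2 * t) * sqrt (1 + r^2 - 2/3 * r^2 * t)"
    proof -
      have "(1 + r^2 - 2/3 * r^2 * t) powr (3/2) = (1 + r^2 - 2/3 * r^2 * t) powr (1 + 1/2)" by simp
      also have "\<dots> = (1 + r^2 - 2/3 * r^2 * t) * sqrt (1 + r^2 - 2/3 * r^2 * t)"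
        unfolding powr_add using p0 by (simp add: powr_half_sqrt)
      finally show ?thesis .
    qed
    show ?thesis unfolding T_def Let_def r_def[symmetric]
      by (simp only: c2 c3 pw)
  qed
  have "(T \<rho> has_real_derivative D) (at 1)"
    by (rule has_field_derivative_transform_within_open[OF d2, of "{0<..<3/2}"]) (use eqT in auto)
  then have "(T \<rho> has_real_derivative D) (at 1 within {0<..1})"
    by (rule has_field_derivative_at_within)
  moreover have "D \<ge> 0" unfolding D_def S_def by (rule Dpos[OF r])
  ultimately show ?thesis by blast
qed

end
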